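(* For every permutation $\beta$, the set of properties $\{\operatorname{Av}(\delta) : \delta\le\beta\}$ is query-complete.
   Context: A permutation $\pi$ contains $\sigma$ (written $\sigma\le\pi$) if $\pi$ has a subsequence order-isomorphic to $\sigma$; $\operatorname{Av}(\delta)$ is the set of permutations not containing $\delta$. For $\sigma\in S_m$ and nonempty permutations $\alpha_1,\dots,\alpha_m$, the inflation $\sigma[\alpha_1,\dots,\alpha_m]$ is the permutation obtained by replacing each entry $\sigma(i)$ by an interval (contiguous positions, consecutive values) order-isomorphic to $\alpha_i$. A property is any set of permutations. A set $\mathcal{P}$ of properties is query-complete if for every permutation $\sigma\in S_m$ and every $P\in\mathcal{P}$, whether $\sigma[\alpha_1,\dots,\alpha_m]\in P$ is determined by $\sigma$ together with the knowledge, for each $i\in[m]$ and each $Q\in\mathcal{P}$, of whether $\alpha_i\in Q$. *)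

theory Defs
  imports Main
begin

(* A permutation of length n is represented as a list that is a rearrangement
   of [0..<n] (one-line notation, values 0-based). *)
definition is_perm :: "nat list \<Rightarrow> bool" where
  "is_perm p \<longleftrightarrow> distinct p \<and> set p = {0..<length p}"

definition order_iso :: "nat list \<Rightarrow> nat list \<Rightarrow> bool" where
  "order_iso xs ys \<longleftrightarrow> length xs = length ys \<and>
     (\<forall>i<length xs. \<forall>j<length xs. xs ! i < xs ! j \<longleftrightarrow> ys ! i < ys ! j)"

definition contains :: "nat list \<Rightarrow> nat list \<Rightarrow> bool" where
  "contains \<sigma> \<pi> \<longleftrightarrow> (\<exists>I. I \<subseteq> {..<length \<pi>} \<and> order_iso \<sigma> (nths \<pi> I))"

definition Av :: "nat list \<Rightarrow> nat list set" where
  "Av \<delta> = {\<pi>. is_perm \<pi> \<and> \<not> contains \<delta> \<pi>}"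

(* inflation sigma[alpha_1,...,alpha_m]: block i occupies consecutive positions
   (in order of i) and consecutive values, shifted by the total size of the
   blocks j with sigma(j) < sigma(i). *)
definition inflate :: "nat list \<Rightarrow> nat list list \<Rightarrow> nat list" where
  "inflate \<sigma> \<alpha>s = concat (map (\<lambda>i. map (\<lambda>x. x +
        (\<Sum>j\<in>{j. j < length \<sigma> \<and> \<sigma> ! j < \<sigma> ! i}. length (\<alpha>s ! j))) (\<alpha>s ! i))
     [0..<length \<sigma>])"

definition query_complete :: "nat list set set \<Rightarrow> bool" where
  "query_complete \<P> \<longleftrightarrow>
     (\<forall>\<sigma> \<alpha>s \<alpha>s'. is_perm \<sigma> \<longrightarrow>
        length \<alpha>s = length \<sigma> \<longrightarrow> length \<alpha>s' = length \<sigma> \<longrightarrow>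
        (\<forall>i<length \<sigma>. is_perm (\<alpha>s ! i) \<and> \<alpha>s ! i \<noteq> [] \<and>
                          is_perm (\<alpha>s' ! i) \<and> \<alpha>s' ! i \<noteq> []) \<longrightarrow>
        (\<forall>i<length \<sigma>. \<forall>Q\<in>\<P>. \<alpha>s ! i \<in> Q \<longleftrightarrow> \<alpha>s' ! i \<in> Q) \<longrightarrow>
        (\<forall>P\<in>\<P>. inflate \<sigma> \<alpha>s \<in> P \<longleftrightarrow> inflate \<sigma> \<alpha>s' \<in> P))"

end

theory Submission
  imports Defs
begin


definition emb :: "nat list \<Rightarrow> nat list \<Rightarrow> (nat \<Rightarrow> nat) \<Rightarrow> bool" where
  "emb d p f \<longleftrightarrow> (\<forall>x<length d. f x < length p) \<and>
     (\<forall>x y. x < y \<longrightarrow> y < length d \<longrightarrow> f x < f y) \<and>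
     (\<forall>x<length d. \<forall>y<length d. d ! x < d ! y \<longleftrightarrow> p ! f x < p ! f y)"

lemma nths_emb:
  "\<exists>f. (\<forall>t<length (nths xs I). f t < length xs \<and> nths xs I ! t = xs ! f t) \<and>
       (\<forall>t u. t < u \<longrightarrow> u < length (nths xs I) \<longrightarrow> f t < f u)"
proof (induction xs arbitrary: I)
  case Nil
  then show ?case by simp
next
  case (Cons x xs)
  obtain g where g: "\<forall>t<length (nths xs {j. Suc j \<in> I}). g t < length xs \<and> nths xs {j. Suc j \<in> I} ! t = xs ! g t"
    "\<forall>t u. t < u \<longrightarrow> u < length (nths xs {j. Suc j \<in> I}) \<longrightarrow> g t < g u"
    using Cons.IH by blast
  show ?case
  proof (cases "0 \<in> I")
    case True
    then have e: "nths (x # xs) I = x # nths xs {j. Suc j \<in> I}" by (simp add: nths_Cons)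
    show ?thesis
      apply (rule exI[of _ "\<lambda>t. if t = 0 then 0 else Suc (g (t - 1))"])
      using g unfolding e
      apply (auto simp: nth_Cons' less_Suc_eq_0_disj)
      done
  next
    case False
    then have e: "nths (x # xs) I = nths xs {j. Suc j \<in> I}" by (simp add: nths_Cons)
    show ?thesis
      apply (rule exI[of _ "\<lambda>t. Suc (g t)"])
      using g unfolding e by auto
  qed
qed

lemma emb_nths:
  "(\<forall>t<k. f t < length xs) \<Longrightarrow> (\<forall>t u. t < u \<longrightarrow> u < k \<longrightarrow> f t < f u) \<Longrightarrow>
   \<exists>I. I \<subseteq> {..<length xs} \<and> length (nths xs I) = k \<and> (\<forall>t<k. nths xs I ! t = xs ! f t)"
proof (induction xs arbitrary: f k)
  case Nil
  then show ?case by (cases k) auto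
next
  case (Cons x xs)
  show ?case
  proof (cases k)
    case 0
    then show ?thesis by (intro exI[of _ "{}"]) auto
  next
    case (Suc k')
    show ?thesis
    proof (cases "f 0 = 0")
      case True
      have pos: "\<forall>t<k'. f (Suc t) > 0" using Cons.prems True Suc by (metis zero_less_Suc Suc_mono)
      have "\<exists>I. I \<subseteq> {..<length xs} \<and> length (nths xs I) = k' \<and> (\<forall>t<k'. nths xs I ! t = xs ! (f (Suc t) - 1))"
      proof (rule Cons.IH; intro allI impI)
        fix t assume t: "t < k'"
        have "f (Suc t) < Suc (length xs)" "0 < f (Suc t)" using Cons.prems Suc pos t by auto
        then show "f (Suc t) - 1 < length xs" by linarith
      next
        fix t u assume tu: "t < u" "u < k'"
        have "f (Suc t) < f (Suc u)" "0 < f (Suc t)" using Cons.prems Suc pos tu by auto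
        then show "f (Suc t) - 1 < f (Suc u) - 1" by linarith
      qed
      then obtain I where I: "I \<subseteq> {..<length xs}" "length (nths xs I) = k'" "\<forall>t<k'. nths xs I ! t = xs ! (f (Suc t) - 1)" by blast
      have s: "{j. Suc j \<in> insert 0 (Suc ` I)} = I" by auto
      have e: "nths (x # xs) (insert 0 (Suc ` I)) = x # nths xs I"
        unfolding nths_Cons s by simp
      show ?thesis
        apply (rule exI[of _ "insert 0 (Suc ` I)"])
        unfolding e using I Suc True pos
        apply (auto simp: nth_Cons' less_Suc_eq_0_disj)
        done
    next
      case False
      have pos: "\<forall>t<k. f t > 0" using Cons.prems False by (metis neq0_conv not_less0 less_nat_zero_code gr0I)
      have "\<exists>I. I \<subseteq> {..<length xs} \<and> length (nths xs I) = k \<and> (\<forall>t<k. nths xs I ! t = xs ! (f t - 1))"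
      proof (rule Cons.IH; intro allI impI)
        fix t assume t: "t < k"
        have "f t < Suc (length xs)" "0 < f t" using Cons.prems pos t by auto
        then show "f t - 1 < length xs" by linarith
      next
        fix t u assume tu: "t < u" "u < k"
        have "f t < f u" "0 < f t" using Cons.prems pos tu by auto
        then show "f t - 1 < f u - 1" by linarith
      qed
      then obtain I where I: "I \<subseteq> {..<length xs}" "length (nths xs I) = k" "\<forall>t<k. nths xs I ! t = xs ! (f t - 1)" by blast
      have s: "{j. Suc j \<in> Suc ` I} = I" by auto
      have e: "nths (x # xs) (Suc ` I) = nths xs I"
        unfolding nths_Cons s by simp
      show ?thesis
        apply (rule exI[of _ "Suc ` I"])
        unfolding e using I pos
        apply (auto simp: nth_Cons')
        done
    qed
  qed
qed

lemma contains_emb: "contains d p \<longleftrightarrow> (\<exists>f. emb d p f)"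
proof
  assume "contains d p"
  then obtain I where I: "I \<subseteq> {..<length p}" "order_iso d (nths p I)" unfolding contains_def by blast
  obtain f where f: "\<forall>t<length (nths p I). f t < length p \<and> nths p I ! t = p ! f t"
       "\<forall>t u. t < u \<longrightarrow> u < length (nths p I) \<longrightarrow> f t < f u" using nths_emb by blast
  have "emb d p f" using I(2) f unfolding emb_def order_iso_def by auto
  then show "\<exists>f. emb d p f" by blast
next
  assume "\<exists>f. emb d p f"
  then obtain f where f: "emb d p f" by blast
  then obtain I where "I \<subseteq> {..<length p} \<and> length (nths p I) = length d \<and> (\<forall>t<length d. nths p I ! t = p ! f t)"
    using emb_nths[of "length d" f p] unfolding emb_def by blast
  then show "contains d p" using f unfolding contains_def order_iso_def emb_def by auto
qed

lemma emb_trans: "emb a b f \<Longrightarrow> emb b c g \<Longrightarrow> emb a c (g \<circ> f)"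
  unfolding emb_def by auto

lemma contains_trans: "contains a b \<Longrightarrow> contains b c \<Longrightarrow> contains a c"
  using emb_trans contains_emb by metis



definition std :: "nat list \<Rightarrow> nat list" where
  "std xs = map (\<lambda>x. card {y \<in> set xs. y < x}) xs"

lemma rank_mono:
  fixes xs :: "nat list"
  assumes "x \<in> set xs" "x' \<in> set xs" "x < x'"
  shows "card {y \<in> set xs. y < x} < card {y \<in> set xs. y < x'}"
proof -
  have s: "{y \<in> set xs. y < x} \<subseteq> {y \<in> set xs. y < x'}" using assms by auto
  have n: "x \<in> {y \<in> set xs. y < x'}" "x \<notin> {y \<in> set xs. y < x}" using assms by auto
  have "{y \<in> set xs. y < x} \<subset> {y \<in> set xs. y < x'}" using s n by blast
  then show ?thesis by (rule psubset_card_mono[rotated]) simp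
qed

lemma rank_iff:
  fixes xs :: "nat list"
  assumes "x \<in> set xs" "x' \<in> set xs"
  shows "card {y \<in> set xs. y < x} < card {y \<in> set xs. y < x'} \<longleftrightarrow> x < x'"
  using rank_mono[OF assms] rank_mono[OF assms(2,1)]
  by (metis less_asym linorder_neqE_nat)

lemma std_props:
  assumes "distinct xs"
  shows "is_perm (std xs)" "length (std xs) = length xs"
        "\<forall>i<length xs. \<forall>j<length xs. std xs ! i < std xs ! j \<longleftrightarrow> xs ! i < xs ! j"
proof -
  let ?r = "\<lambda>x. card {y \<in> set xs. y < x}"
  have inj: "inj_on ?r (set xs)"
  proof (rule inj_onI, rule ccontr)
    fix x y assume h: "x \<in> set xs" "y \<in> set xs" "?r x = ?r y" "x \<noteq> y"
    then have "x < y \<or> y < x" by arith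
    then show False using rank_mono[OF h(1,2)] rank_mono[OF h(2,1)] h(3) by auto
  qed
  show "length (std xs) = length xs" by (simp add: std_def)
  show "\<forall>i<length xs. \<forall>j<length xs. std xs ! i < std xs ! j \<longleftrightarrow> xs ! i < xs ! j"
    by (simp add: std_def rank_iff)
  have d: "distinct (std xs)" unfolding std_def using assms inj by (simp add: distinct_map)
  have sub: "set (std xs) \<subseteq> {0..<length xs}"
  proof
    fix z assume "z \<in> set (std xs)"
    then obtain x where x: "x \<in> set xs" "z = ?r x" unfolding std_def by auto
    have "{y \<in> set xs. y < x} \<subset> set xs" using x by auto
    then have "?r x < card (set xs)" by (simp add: psubset_card_mono)
    moreover have "card (set xs) = length xs" using assms by (rule distinct_card)
    ultimately show "z \<in> {0..<length xs}" using x by simp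
  qed
  have "card (set (std xs)) = length xs"
    using d distinct_card[of "std xs"] by (simp add: std_def)
  then have "set (std xs) = {0..<length xs}"
    using sub by (simp add: card_subset_eq)
  then show "is_perm (std xs)" unfolding is_perm_def using d by (simp add: std_def)
qed

lemma emb_std: "distinct xs \<Longrightarrow> emb (std xs) p f \<longleftrightarrow> emb xs p f"
  using std_props[of xs] unfolding emb_def by auto




lemma sum_decomp:
  fixes L :: "nat \<Rightarrow> nat"
  shows "p < (\<Sum>j<m. L j) \<Longrightarrow> \<exists>i<m. \<exists>a<L i. p = (\<Sum>j<i. L j) + a"
proof (induction m)
  case 0 then show ?case by simp
next
  case (Suc m)
  show ?case
  proof (cases "p < (\<Sum>j<m. L j)")
    case True
    then show ?thesis using Suc.IH less_Suc_eq by blast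
  next
    case False
    then show ?thesis using Suc.prems
      by (intro exI[of _ m]) (auto intro!: exI[of _ "p - (\<Sum>j<m. L j)"])
  qed
qed

lemma sum_lt_mono:
  fixes L :: "nat \<Rightarrow> nat"
  assumes "i < j" "a < L i"
  shows "(\<Sum>k<i. L k) + a < (\<Sum>k<j. L k)"
proof -
  have "(\<Sum>k<i. L k) + a < (\<Sum>k<Suc i. L k)" using assms by simp
  also have "\<dots> \<le> (\<Sum>k<j. L k)" using assms by (intro sum_mono2) auto
  finally show ?thesis .
qed

lemma sum_pos_order:
  fixes L :: "nat \<Rightarrow> nat"
  assumes "a < L i" "b < L j" "(\<Sum>k<i. L k) + a < (\<Sum>k<j. L k) + b"
  shows "i < j \<or> (i = j \<and> a < b)"
proof (rule ccontr)
  assume "\<not> ?thesis"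
  then have "j < i \<or> (i = j \<and> b \<le> a)" by auto
  then show False
  proof
    assume "j < i"
    then have "(\<Sum>k<j. L k) + b < (\<Sum>k<i. L k)" using sum_lt_mono assms by blast
    then show False using assms by linarith
  next
    assume "i = j \<and> b \<le> a" then show False using assms by simp
  qed
qed

lemma concat_nth:
  "i < length Ls \<Longrightarrow> a < length (Ls ! i) \<Longrightarrow>
   concat Ls ! ((\<Sum>j<i. length (Ls ! j)) + a) = Ls ! i ! a"
proof (induction Ls arbitrary: i)
  case Nil then show ?case by simp
next
  case (Cons l Ls)
  show ?case
  proof (cases i)
    case 0 then show ?thesis using Cons.prems by (simp add: nth_append)
  next
    case (Suc i')
    have "(\<Sum>j<i. length ((l # Ls) ! j)) = length l + (\<Sum>j<i'. length (Ls ! j))"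
      unfolding Suc by (simp del: sum.lessThan_Suc add: sum.lessThan_Suc_shift)
    then show ?thesis using Cons Suc by (simp add: nth_append add.assoc)
  qed
qed

lemma length_concat_sum: "length (concat Ls) = (\<Sum>j<length Ls. length (Ls ! j))"
  by (induction Ls) (auto simp del: sum.lessThan_Suc simp add: sum.lessThan_Suc_shift)

definition off :: "nat list \<Rightarrow> nat list list \<Rightarrow> nat \<Rightarrow> nat" where
  "off \<sigma> \<alpha>s i = (\<Sum>j\<in>{j. j < length \<sigma> \<and> \<sigma> ! j < \<sigma> ! i}. length (\<alpha>s ! j))"

definition SS :: "nat list list \<Rightarrow> nat \<Rightarrow> nat" where
  "SS \<alpha>s i = (\<Sum>j<i. length (\<alpha>s ! j))"

lemma inflate_eq: "inflate \<sigma> \<alpha>s = concat (map (\<lambda>i. map (\<lambda>x. x + off \<sigma> \<alpha>s i) (\<alpha>s ! i)) [0..<length \<sigma>])"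
  unfolding inflate_def off_def by simp

lemma inflate_length: "length (inflate \<sigma> \<alpha>s) = SS \<alpha>s (length \<sigma>)"
  unfolding inflate_eq length_concat_sum SS_def by simp

lemma inflate_nth:
  assumes "i < length \<sigma>" "a < length (\<alpha>s ! i)"
  shows "inflate \<sigma> \<alpha>s ! (SS \<alpha>s i + a) = \<alpha>s ! i ! a + off \<sigma> \<alpha>s i"
proof -
  let ?Ls = "map (\<lambda>i. map (\<lambda>x. x + off \<sigma> \<alpha>s i) (\<alpha>s ! i)) [0..<length \<sigma>]"
  have "SS \<alpha>s i = (\<Sum>j<i. length (?Ls ! j))" unfolding SS_def
    using assms(1) by (intro sum.cong) auto
  then show ?thesis unfolding inflate_eq using concat_nth[of i ?Ls a] assms by simp
qed

lemma off_bound: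
  assumes "is_perm \<sigma>" "i < length \<sigma>" "j < length \<sigma>" "\<sigma> ! i < \<sigma> ! j"
  shows "off \<sigma> \<alpha>s i + length (\<alpha>s ! i) \<le> off \<sigma> \<alpha>s j"
proof -
  have "off \<sigma> \<alpha>s i + length (\<alpha>s ! i) = (\<Sum>k\<in>insert i {j. j < length \<sigma> \<and> \<sigma> ! j < \<sigma> ! i}. length (\<alpha>s ! k))"
    unfolding off_def by (subst sum.insert) auto
  also have "\<dots> \<le> off \<sigma> \<alpha>s j" unfolding off_def
    using assms by (intro sum_mono2) auto
  finally show ?thesis .
qed

lemma off_total:
  assumes "i < length \<sigma>"
  shows "off \<sigma> \<alpha>s i + length (\<alpha>s ! i) \<le> SS \<alpha>s (length \<sigma>)"
proof -
  have "off \<sigma> \<alpha>s i + length (\<alpha>s ! i) = (\<Sum>k\<in>insert i {j. j < length \<sigma> \<and> \<sigma> ! j < \<sigma> ! i}. length (\<alpha>s ! k))"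
    unfolding off_def by (subst sum.insert) auto
  also have "\<dots> \<le> SS \<alpha>s (length \<sigma>)" unfolding SS_def
    using assms by (intro sum_mono2) auto
  finally show ?thesis .
qed

lemma perm_lt: "is_perm p \<Longrightarrow> a < length p \<Longrightarrow> p ! a < length p"
  unfolding is_perm_def by (metis atLeastLessThan_iff nth_mem)

lemma inflate_cmp:
  assumes "is_perm \<sigma>" "\<forall>i<length \<sigma>. is_perm (\<alpha>s ! i)"
    "i < length \<sigma>" "j < length \<sigma>" "a < length (\<alpha>s ! i)" "b < length (\<alpha>s ! j)"
  shows "\<alpha>s ! i ! a + off \<sigma> \<alpha>s i < \<alpha>s ! j ! b + off \<sigma> \<alpha>s j \<longleftrightarrow>
         (if i = j then \<alpha>s ! i ! a < \<alpha>s ! i ! b else \<sigma> ! i < \<sigma> ! j)"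
proof (cases "i = j")
  case True then show ?thesis by simp
next
  case False
  then have ne: "\<sigma> ! i \<noteq> \<sigma> ! j" using assms(1,3,4) unfolding is_perm_def
    by (simp add: nth_eq_iff_index_eq)
  have a: "\<alpha>s ! i ! a < length (\<alpha>s ! i)" "\<alpha>s ! j ! b < length (\<alpha>s ! j)"
    using perm_lt assms by auto
  show ?thesis
  proof (cases "\<sigma> ! i < \<sigma> ! j")
    case True
    then show ?thesis using off_bound[OF assms(1,3,4) True, of \<alpha>s] a False by simp
  next
    case f: False
    then have "\<sigma> ! j < \<sigma> ! i" using ne by simp
    then show ?thesis using off_bound[OF assms(1,4,3), of \<alpha>s] a False f by simp
  qed
qed

lemma inflate_perm:
  assumes "is_perm \<sigma>" "length \<alpha>s = length \<sigma>" "\<forall>i<length \<sigma>. is_perm (\<alpha>s ! i)"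
  shows "is_perm (inflate \<sigma> \<alpha>s)"
proof -
  let ?p = "inflate \<sigma> \<alpha>s" and ?N = "SS \<alpha>s (length \<sigma>)"
  have dec: "\<exists>i<length \<sigma>. \<exists>a<length (\<alpha>s ! i). q = SS \<alpha>s i + a" if "q < ?N" for q
    using sum_decomp[of q "\<lambda>j. length (\<alpha>s ! j)" "length \<sigma>"] that unfolding SS_def by simp
  have d: "distinct ?p"
  proof (subst distinct_conv_nth, intro allI impI)
    fix p q assume pq: "p < length ?p" "q < length ?p" "p \<noteq> q"
    obtain i a where ia: "i < length \<sigma>" "a < length (\<alpha>s ! i)" "p = SS \<alpha>s i + a"
      using dec pq inflate_length by metis
    obtain j b where jb: "j < length \<sigma>" "b < length (\<alpha>s ! j)" "q = SS \<alpha>s j + b"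
      using dec pq inflate_length by metis
    have vp: "?p ! p = \<alpha>s ! i ! a + off \<sigma> \<alpha>s i" using inflate_nth ia by simp
    have vq: "?p ! q = \<alpha>s ! j ! b + off \<sigma> \<alpha>s j" using inflate_nth jb by simp
    show "?p ! p \<noteq> ?p ! q"
    proof (cases "i = j")
      case True
      then have "a \<noteq> b" using ia jb pq by auto
      then have "\<alpha>s ! i ! a \<noteq> \<alpha>s ! i ! b" using assms(3) ia jb True unfolding is_perm_def
        by (simp add: nth_eq_iff_index_eq)
      then show ?thesis using vp vq True by simp
    next
      case False
      then have ne: "\<sigma> ! i \<noteq> \<sigma> ! j" using assms(1) ia jb unfolding is_perm_def
        by (simp add: nth_eq_iff_index_eq)
      have "?p ! p < ?p ! q \<longleftrightarrow> \<sigma> ! i < \<sigma> ! j" using inflate_cmp[OF assms(1,3) ia(1) jb(1) ia(2) jb(2)] vp vq False by simp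
      moreover have "?p ! q < ?p ! p \<longleftrightarrow> \<sigma> ! j < \<sigma> ! i" using inflate_cmp[OF assms(1,3) jb(1) ia(1) jb(2) ia(2)] vp vq False by simp
      ultimately show ?thesis using ne by (metis less_irrefl linorder_neqE_nat)
    qed
  qed
  have sub: "set ?p \<subseteq> {0..<length ?p}"
  proof
    fix v assume "v \<in> set ?p"
    then obtain p where p: "p < length ?p" "v = ?p ! p" by (metis in_set_conv_nth)
    obtain i a where ia: "i < length \<sigma>" "a < length (\<alpha>s ! i)" "p = SS \<alpha>s i + a"
      using dec p inflate_length by metis
    have "v = \<alpha>s ! i ! a + off \<sigma> \<alpha>s i" using inflate_nth ia p by simp
    moreover have "\<alpha>s ! i ! a < length (\<alpha>s ! i)" using perm_lt assms ia by auto
    ultimately show "v \<in> {0..<length ?p}" using off_total[OF ia(1), of \<alpha>s] inflate_length by simp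
  qed
  have "set ?p = {0..<length ?p}"
    using sub d distinct_card[of ?p] by (simp add: card_subset_eq)
  then show ?thesis unfolding is_perm_def using d by simp
qed



lemma transfer:
  assumes \<sigma>: "is_perm \<sigma>" and len: "length \<alpha>s = length \<sigma>" "length \<alpha>s' = length \<sigma>"
  and perms: "\<forall>i<length \<sigma>. is_perm (\<alpha>s ! i) \<and> is_perm (\<alpha>s' ! i)"
  and agree: "\<forall>\<gamma>. is_perm \<gamma> \<and> contains \<gamma> \<beta> \<longrightarrow> (\<forall>i<length \<sigma>. contains \<gamma> (\<alpha>s ! i) \<longleftrightarrow> contains \<gamma> (\<alpha>s' ! i))"
  and \<delta>: "is_perm \<delta>" "contains \<delta> \<beta>"
  and c: "contains \<delta> (inflate \<sigma> \<alpha>s)"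
  shows "contains \<delta> (inflate \<sigma> \<alpha>s')"
proof -
  let ?m = "length \<sigma>" and ?k = "length \<delta>"
  have p1: "\<forall>i<?m. is_perm (\<alpha>s ! i)" and p2: "\<forall>i<?m. is_perm (\<alpha>s' ! i)" using perms by auto
  obtain f where f: "emb \<delta> (inflate \<sigma> \<alpha>s) f" using c contains_emb by blast
  have dec: "\<forall>x. \<exists>p. x < ?k \<longrightarrow> fst p < ?m \<and> snd p < length (\<alpha>s ! fst p) \<and> f x = SS \<alpha>s (fst p) + snd p"
  proof (intro allI)
    fix x
    show "\<exists>p. x < ?k \<longrightarrow> fst p < ?m \<and> snd p < length (\<alpha>s ! fst p) \<and> f x = SS \<alpha>s (fst p) + snd p"
    proof (cases "x < ?k")
      case True
      then have "f x < (\<Sum>j<?m. length (\<alpha>s ! j))" using f inflate_length unfolding emb_def SS_def by metis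
      then obtain i a where "i < ?m" "a < length (\<alpha>s ! i)" "f x = SS \<alpha>s i + a"
        using sum_decomp[of "f x" "\<lambda>j. length (\<alpha>s ! j)" ?m] unfolding SS_def by blast
      then show ?thesis by (intro exI[of _ "(i, a)"]) simp
    qed simp
  qed
  obtain F where F: "\<forall>x. x < ?k \<longrightarrow> fst (F x) < ?m \<and> snd (F x) < length (\<alpha>s ! fst (F x)) \<and> f x = SS \<alpha>s (fst (F x)) + snd (F x)"
    using choice[OF dec] by blast
  define I where "I = (\<lambda>x. fst (F x))"
  define A where "A = (\<lambda>x. snd (F x))"
  have IA: "I x < ?m" "A x < length (\<alpha>s ! I x)" "f x = SS \<alpha>s (I x) + A x" if "x < ?k" for x
    using F that unfolding I_def A_def by auto
  have val: "inflate \<sigma> \<alpha>s ! f x = \<alpha>s ! I x ! A x + off \<sigma> \<alpha>s (I x)" if "x < ?k" for x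
    using IA[OF that] inflate_nth by simp
  have ord: "I x < I y \<or> (I x = I y \<and> A x < A y)" if "x < y" "y < ?k" for x y
  proof -
    have "f x < f y" using f that unfolding emb_def by blast
    then show ?thesis using IA[of x] IA[of y] that sum_pos_order[of "A x" "\<lambda>j. length (\<alpha>s ! j)" "I x" "A y" "I y"]
      unfolding SS_def by simp
  qed
  have rel: "\<delta> ! x < \<delta> ! y \<longleftrightarrow> (if I x = I y then \<alpha>s ! I x ! A x < \<alpha>s ! I x ! A y else \<sigma> ! I x < \<sigma> ! I y)"
    if "x < ?k" "y < ?k" for x y
  proof -
    have "\<delta> ! x < \<delta> ! y \<longleftrightarrow> inflate \<sigma> \<alpha>s ! f x < inflate \<sigma> \<alpha>s ! f y" using f that unfolding emb_def by blast
    also have "\<dots> \<longleftrightarrow> (if I x = I y then \<alpha>s ! I x ! A x < \<alpha>s ! I x ! A y else \<sigma> ! I x < \<sigma> ! I y)"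
      unfolding val[OF that(1)] val[OF that(2)]
      using inflate_cmp[OF \<sigma> p1 IA(1)[OF that(1)] IA(1)[OF that(2)] IA(2)[OF that(1)] IA(2)[OF that(2)]]
      by (simp split: if_splits)
    finally show ?thesis .
  qed
  have blk: "\<exists>g. \<forall>x<?k. \<forall>y<?k. I x = i \<longrightarrow> I y = i \<longrightarrow> g x < length (\<alpha>s' ! i) \<and> (x < y \<longrightarrow> g x < g y) \<and>
        (\<alpha>s' ! i ! g x < \<alpha>s' ! i ! g y \<longleftrightarrow> \<delta> ! x < \<delta> ! y)" if i: "i < ?m" for i
  proof -
    define lst where "lst = filter (\<lambda>x. I x = i) [0..<?k]"
    define d where "d = map ((!) \<delta>) lst"
    have sl: "sorted_wrt (<) lst" unfolding lst_def by (simp add: sorted_wrt_filter)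
    have lst_in: "lst ! t < ?k \<and> I (lst ! t) = i" if "t < length lst" for t
    proof -
      have "lst ! t \<in> set lst" using that by simp
      then show ?thesis unfolding lst_def by simp
    qed
    have lst_mono: "lst ! t < lst ! u" if "t < u" "u < length lst" for t u
      using sl that sorted_wrt_nth_less by blast
    have dl: "distinct lst" unfolding lst_def by simp
    have dd: "distinct d" unfolding d_def
    proof (subst distinct_map, intro conjI dl inj_onI)
      fix x y assume "x \<in> set lst" "y \<in> set lst" "\<delta> ! x = \<delta> ! y"
      moreover have "distinct \<delta>" using \<delta>(1) unfolding is_perm_def by simp
      ultimately show "x = y" unfolding lst_def by (simp add: nth_eq_iff_index_eq)
    qed
    have e1: "emb d \<delta> (\<lambda>t. lst ! t)" unfolding emb_def d_def using lst_in lst_mono by auto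
    have e2: "emb d (\<alpha>s ! i) (\<lambda>t. A (lst ! t))"
      unfolding emb_def
    proof (intro conjI allI impI)
      fix t assume "t < length d"
      then have "lst ! t < ?k" "I (lst ! t) = i" using lst_in unfolding d_def by auto
      then show "A (lst ! t) < length (\<alpha>s ! i)" using IA(2)[of "lst ! t"] by simp
    next
      fix t u assume tu: "t < u" "u < length d"
      then have "lst ! t < lst ! u" "lst ! u < ?k" "I (lst ! t) = i" "I (lst ! u) = i"
        using lst_mono lst_in unfolding d_def by auto
      then show "A (lst ! t) < A (lst ! u)" using ord[of "lst ! t" "lst ! u"] by simp
    next
      fix t u assume tu: "t < length d" "u < length d"
      then have "lst ! t < ?k" "lst ! u < ?k" "I (lst ! t) = i" "I (lst ! u) = i"
        using lst_in unfolding d_def by auto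
      then show "d ! t < d ! u \<longleftrightarrow> \<alpha>s ! i ! A (lst ! t) < \<alpha>s ! i ! A (lst ! u)"
        using rel tu unfolding d_def by simp
    qed
    have "contains (std d) \<delta>" using e1 emb_std[OF dd] contains_emb by blast
    then have cb: "contains (std d) \<beta>" using \<delta>(2) contains_trans by blast
    have ps: "is_perm (std d)" using std_props(1)[OF dd] .
    have "contains (std d) (\<alpha>s ! i)" using e2 emb_std[OF dd] contains_emb by blast
    then have "contains (std d) (\<alpha>s' ! i)" using agree cb ps i by blast
    then obtain h where "emb (std d) (\<alpha>s' ! i) h" using contains_emb by blast
    then have h: "emb d (\<alpha>s' ! i) h" using emb_std[OF dd] by blast
    have "\<forall>x. \<exists>t. x < ?k \<and> I x = i \<longrightarrow> t < length lst \<and> lst ! t = x"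
    proof
      fix x show "\<exists>t. x < ?k \<and> I x = i \<longrightarrow> t < length lst \<and> lst ! t = x"
      proof (cases "x < ?k \<and> I x = i")
        case True
        then have "x \<in> set lst" unfolding lst_def by simp
        then obtain t where "t < length lst" "lst ! t = x" by (auto simp: in_set_conv_nth)
        then show ?thesis by blast
      next
        case False then show ?thesis by blast
      qed
    qed
    from choice[OF this] obtain T where T: "\<forall>x. x < ?k \<and> I x = i \<longrightarrow> T x < length lst \<and> lst ! (T x) = x"
      by blast
    have Tmono: "T x < T y" if "x < y" "y < ?k" "I x = i" "I y = i" for x y
    proof (rule ccontr)
      assume "\<not> T x < T y"
      then have "T y < T x \<or> T y = T x" by auto
      then show False
      proof
        assume "T y < T x"
        moreover have "T x < length lst" "lst ! T y = y" "lst ! T x = x" using T that by auto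
        ultimately have "y < x" using lst_mono by metis
        then show False using that by simp
      next
        assume "T y = T x"
        moreover have "lst ! T y = y" "lst ! T x = x" using T that by auto
        ultimately show False using that by simp
      qed
    qed
    show ?thesis
    proof (rule exI[of _ "\<lambda>x. h (T x)"], intro allI impI conjI)
      fix x y assume xy: "x < ?k" "y < ?k" "I x = i" "I y = i"
      have lT: "T x < length d" "T y < length d" using T xy unfolding d_def by auto
      show "h (T x) < length (\<alpha>s' ! i)" using h lT unfolding emb_def by blast
      show "x < y \<Longrightarrow> h (T x) < h (T y)" using h lT Tmono xy unfolding emb_def by blast
      have "\<alpha>s' ! i ! h (T x) < \<alpha>s' ! i ! h (T y) \<longleftrightarrow> d ! T x < d ! T y" using h lT unfolding emb_def by blast
      also have "\<dots> \<longleftrightarrow> \<delta> ! x < \<delta> ! y" using lT T xy unfolding d_def by simp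
      finally show "\<alpha>s' ! i ! h (T x) < \<alpha>s' ! i ! h (T y) \<longleftrightarrow> \<delta> ! x < \<delta> ! y" .
    qed
  qed
  have "\<forall>i. \<exists>g. i < ?m \<longrightarrow> (\<forall>x<?k. \<forall>y<?k. I x = i \<longrightarrow> I y = i \<longrightarrow> g x < length (\<alpha>s' ! i) \<and> (x < y \<longrightarrow> g x < g y) \<and>
        (\<alpha>s' ! i ! g x < \<alpha>s' ! i ! g y \<longleftrightarrow> \<delta> ! x < \<delta> ! y))"
    using blk by blast
  from choice[OF this] obtain G where G: "\<forall>i. i < ?m \<longrightarrow> (\<forall>x<?k. \<forall>y<?k. I x = i \<longrightarrow> I y = i \<longrightarrow> G i x < length (\<alpha>s' ! i) \<and> (x < y \<longrightarrow> G i x < G i y) \<and>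
        (\<alpha>s' ! i ! G i x < \<alpha>s' ! i ! G i y \<longleftrightarrow> \<delta> ! x < \<delta> ! y))"
    by blast
  have Gp: "G i x < length (\<alpha>s' ! i) \<and> (x < y \<longrightarrow> G i x < G i y) \<and> (\<alpha>s' ! i ! G i x < \<alpha>s' ! i ! G i y \<longleftrightarrow> \<delta> ! x < \<delta> ! y)"
    if "i < ?m" "x < ?k" "y < ?k" "I x = i" "I y = i" for i x y
    using G that by blast
  define B where "B = (\<lambda>x. G (I x) x)"
  have Bb: "B x < length (\<alpha>s' ! I x)" if "x < ?k" for x using Gp[OF IA(1)[OF that] that that refl refl] unfolding B_def by blast
  define f' where "f' = (\<lambda>x. SS \<alpha>s' (I x) + B x)"
  have val': "inflate \<sigma> \<alpha>s' ! f' x = \<alpha>s' ! I x ! B x + off \<sigma> \<alpha>s' (I x)" if "x < ?k" for x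
    unfolding f'_def using inflate_nth IA(1)[OF that] Bb[OF that] by simp
  have "emb \<delta> (inflate \<sigma> \<alpha>s') f'"
    unfolding emb_def
  proof (intro conjI allI impI)
    fix x assume x: "x < ?k"
    show "f' x < length (inflate \<sigma> \<alpha>s')"
      unfolding inflate_length f'_def SS_def
      using sum_lt_mono[of "I x" ?m "B x" "\<lambda>j. length (\<alpha>s' ! j)"] IA(1)[OF x] Bb[OF x] by simp
  next
    fix x y assume xy: "x < y" "y < ?k"
    then have x: "x < ?k" by simp
    from ord[OF xy] show "f' x < f' y"
    proof
      assume "I x < I y"
      then show ?thesis unfolding f'_def SS_def
        using sum_lt_mono[of "I x" "I y" "B x" "\<lambda>j. length (\<alpha>s' ! j)"] Bb[OF x] by simp
    next
      assume "I x = I y \<and> A x < A y"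
      then show ?thesis unfolding f'_def B_def using Gp[OF IA(1)[OF x] x xy(2) refl] xy(1) by simp
    qed
  next
    fix x y assume x: "x < ?k" and y: "y < ?k"
    have "inflate \<sigma> \<alpha>s' ! f' x < inflate \<sigma> \<alpha>s' ! f' y \<longleftrightarrow>
          (if I x = I y then \<alpha>s' ! I x ! B x < \<alpha>s' ! I x ! B y else \<sigma> ! I x < \<sigma> ! I y)"
      unfolding val'[OF x] val'[OF y]
      using inflate_cmp[OF \<sigma> p2 IA(1)[OF x] IA(1)[OF y] Bb[OF x] Bb[OF y]]
      by (simp split: if_splits)
    also have "\<dots> \<longleftrightarrow> \<delta> ! x < \<delta> ! y"
    proof (cases "I x = I y")
      case True
      then show ?thesis using Gp[OF IA(1)[OF x] x y refl] unfolding B_def by simp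
    next
      case False
      then show ?thesis using rel[OF x y] by simp
    qed
    finally show "\<delta> ! x < \<delta> ! y \<longleftrightarrow> inflate \<sigma> \<alpha>s' ! f' x < inflate \<sigma> \<alpha>s' ! f' y" by simp
  qed
  then show ?thesis using contains_emb by blast
qed

theorem lemma4p1:
  assumes "is_perm \<beta>"
  shows "query_complete {Av \<delta> | \<delta>. is_perm \<delta> \<and> contains \<delta> \<beta>}"
  unfolding query_complete_def
proof (intro allI impI ballI)
  fix \<sigma> \<alpha>s \<alpha>s' P
  assume \<sigma>: "is_perm \<sigma>" and l1: "length \<alpha>s = length \<sigma>" and l2: "length \<alpha>s' = length \<sigma>"
    and ps: "\<forall>i<length \<sigma>. is_perm (\<alpha>s ! i) \<and> \<alpha>s ! i \<noteq> [] \<and> is_perm (\<alpha>s' ! i) \<and> \<alpha>s' ! i \<noteq> []"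
    and ag: "\<forall>i<length \<sigma>. \<forall>Q\<in>{Av \<delta> | \<delta>. is_perm \<delta> \<and> contains \<delta> \<beta>}. \<alpha>s ! i \<in> Q \<longleftrightarrow> \<alpha>s' ! i \<in> Q"
    and P: "P \<in> {Av \<delta> | \<delta>. is_perm \<delta> \<and> contains \<delta> \<beta>}"
  obtain \<delta> where \<delta>: "P = Av \<delta>" "is_perm \<delta>" "contains \<delta> \<beta>" using P by blast
  have perms: "\<forall>i<length \<sigma>. is_perm (\<alpha>s ! i) \<and> is_perm (\<alpha>s' ! i)" using ps by blast
  have perms': "\<forall>i<length \<sigma>. is_perm (\<alpha>s' ! i) \<and> is_perm (\<alpha>s ! i)" using ps by blast
  have agree: "\<forall>\<gamma>. is_perm \<gamma> \<and> contains \<gamma> \<beta> \<longrightarrow> (\<forall>i<length \<sigma>. contains \<gamma> (\<alpha>s ! i) \<longleftrightarrow> contains \<gamma> (\<alpha>s' ! i))"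
  proof (intro allI impI)
    fix \<gamma> i assume g: "is_perm \<gamma> \<and> contains \<gamma> \<beta>" and i: "i < length \<sigma>"
    have "Av \<gamma> \<in> {Av \<delta> | \<delta>. is_perm \<delta> \<and> contains \<delta> \<beta>}" using g by blast
    then have "\<alpha>s ! i \<in> Av \<gamma> \<longleftrightarrow> \<alpha>s' ! i \<in> Av \<gamma>" using ag i by blast
    then show "contains \<gamma> (\<alpha>s ! i) \<longleftrightarrow> contains \<gamma> (\<alpha>s' ! i)" using perms i unfolding Av_def by auto
  qed
  have agree': "\<forall>\<gamma>. is_perm \<gamma> \<and> contains \<gamma> \<beta> \<longrightarrow> (\<forall>i<length \<sigma>. contains \<gamma> (\<alpha>s' ! i) \<longleftrightarrow> contains \<gamma> (\<alpha>s ! i))"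
    using agree by blast
  have "contains \<delta> (inflate \<sigma> \<alpha>s) \<longleftrightarrow> contains \<delta> (inflate \<sigma> \<alpha>s')"
    using transfer[OF \<sigma> l1 l2 perms agree \<delta>(2,3)] transfer[OF \<sigma> l2 l1 perms' agree' \<delta>(2,3)] by blast
  moreover have "is_perm (inflate \<sigma> \<alpha>s)" "is_perm (inflate \<sigma> \<alpha>s')"
    using inflate_perm \<sigma> l1 l2 perms by auto
  ultimately show "inflate \<sigma> \<alpha>s \<in> P \<longleftrightarrow> inflate \<sigma> \<alpha>s' \<in> P" unfolding \<delta>(1) Av_def by auto
qed

end
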